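(* Fix a finite vertex set $\mathcal{V}$ and a partition $\mathcal{C}$ of $\mathcal{V}$ in which at least one part has at least two vertices. For an attributed graph $G$ on $\mathcal{V}$, let $n_\triangle^{intra}(G)$ be the number of triangles of $G$ all three of whose vertices lie in the same part of $\mathcal{C}$. Then the global sensitivity of $n_\triangle^{intra}$ is $$\max_{G\sim_{at}G'}\bigl|n_\triangle^{intra}(G)-n_\triangle^{intra}(G')\bigr|=\max_{C\in\mathcal{C}}\{|C|-2\}.$$
   Context: An attributed graph is a triple $G=(\mathcal{V},\mathcal{E},X)$ with $\mathcal{V}$ a finite vertex set, $\mathcal{E}$ a set of undirected edges (simple graph), and $X$ a binary matrix assigning to each vertex an attribute vector. Two attributed graphs $G=(\mathcal{V},\mathcal{E},X)$ and $G'=(\mathcal{V},\mathcal{E}',X')$ on the same vertex set are neighbouring, $G\sim_{at}G'$, iff either $|\mathcal{E}\,\triangle\,\mathcal{E}'|=1$ (and the attributes coincide), or they have the same edges and differ in the attribute vector of exactly one vertex. The partition $\mathcal{C}$ is fixed (the same for all graphs considered). *)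

theory Defs
  imports Main
begin

text \<open>An attributed graph on the vertex set V with d binary attributes per vertex:
  a pair (E, X) where E is a set of undirected edges (2-element subsets of V) and
  X assigns to each vertex of V a binary vector of length d (a row of the attribute
  matrix); outside V, X is fixed to the empty list.\<close>

type_synonym 'v agraph = "'v set set \<times> ('v \<Rightarrow> bool list)"

definition attr_graph :: "'v set \<Rightarrow> nat \<Rightarrow> 'v agraph \<Rightarrow> bool" where
  "attr_graph V d G \<longleftrightarrow>
     (\<forall>e\<in>fst G. e \<subseteq> V \<and> card e = 2) \<and>
     (\<forall>v\<in>V. length (snd G v) = d) \<and> (\<forall>v. v \<notin> V \<longrightarrow> snd G v = [])"

definition is_partition :: "'v set \<Rightarrow> 'v set set \<Rightarrow> bool" where
  "is_partition V \<C> \<longleftrightarrow> (\<forall>C\<in>\<C>. C \<noteq> {}) \<and> \<Union>\<C> = V \<and>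
     (\<forall>C\<in>\<C>. \<forall>D\<in>\<C>. C \<noteq> D \<longrightarrow> C \<inter> D = {})"

definition at_neighbour :: "'v set \<Rightarrow> 'v agraph \<Rightarrow> 'v agraph \<Rightarrow> bool" where
  "at_neighbour V G G' \<longleftrightarrow>
     (card ((fst G - fst G') \<union> (fst G' - fst G)) = 1 \<and> snd G = snd G') \<or>
     (fst G = fst G' \<and> (\<exists>v\<in>V. snd G v \<noteq> snd G' v \<and> (\<forall>u. u \<noteq> v \<longrightarrow> snd G u = snd G' u)))"

definition triangles :: "'v set \<Rightarrow> 'v agraph \<Rightarrow> 'v set set" where
  "triangles V G = {T. T \<subseteq> V \<and> card T = 3 \<and>
     (\<forall>x\<in>T. \<forall>y\<in>T. x \<noteq> y \<longrightarrow> {x, y} \<in> fst G)}"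

definition n_tri_intra :: "'v set \<Rightarrow> 'v set set \<Rightarrow> 'v agraph \<Rightarrow> nat" where
  "n_tri_intra V \<C> G = card {T \<in> triangles V G. \<exists>C\<in>\<C>. T \<subseteq> C}"

end

theory Submission
  imports Defs
begin

definition TI :: "'v set \<Rightarrow> 'v set set \<Rightarrow> 'v agraph \<Rightarrow> 'v set set" where
  "TI V \<C> G = {T \<in> triangles V G. \<exists>C\<in>\<C>. T \<subseteq> C}"

lemma TI_finite: "finite V \<Longrightarrow> finite (TI V \<C> G)"
  by (rule finite_subset[of _ "Pow V"]) (auto simp: TI_def triangles_def)

lemma TI_mono: "fst G' \<subseteq> fst G \<Longrightarrow> TI V \<C> G' \<subseteq> TI V \<C> G"
  by (auto simp: TI_def triangles_def)

lemma n_TI: "n_tri_intra V \<C> G = card (TI V \<C> G)"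
  by (simp add: n_tri_intra_def TI_def)

lemma diff_elem:
  assumes "fst G' \<subseteq> fst G" "fst G - fst G' = {e}" "T \<in> TI V \<C> G - TI V \<C> G'"
  shows "\<exists>x y. e = {x,y} \<and> x \<noteq> y \<and> x \<in> T \<and> y \<in> T"
proof -
  from assms(3) have T: "T \<in> triangles V G" "\<exists>C\<in>\<C>. T \<subseteq> C" "T \<notin> TI V \<C> G'"
    by (auto simp: TI_def)
  then have "T \<notin> triangles V G'" by (auto simp: TI_def)
  with T(1) obtain x y where "x \<in> T" "y \<in> T" "x \<noteq> y" "{x,y} \<in> fst G" "{x,y} \<notin> fst G'"
    unfolding triangles_def by blast
  then have "{x,y} \<in> fst G - fst G'" by simp
  then have "e = {x,y}" using assms(2) by simp
  then show ?thesis using \<open>x \<in> T\<close> \<open>y \<in> T\<close> \<open>x \<noteq> y\<close> by blast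
qed

lemma key:
  assumes V: "finite V" and P: "is_partition V \<C>"
    and s: "fst G' \<subseteq> fst G" "fst G - fst G' = {e}"
  shows "card (TI V \<C> G - TI V \<C> G') = 0 \<or>
         (\<exists>C\<in>\<C>. card (TI V \<C> G - TI V \<C> G') + 2 \<le> card C)"
proof (cases "TI V \<C> G - TI V \<C> G' = {}")
  case True then show ?thesis by (metis card.empty)
next
  case False
  then obtain T0 where T0: "T0 \<in> TI V \<C> G - TI V \<C> G'" by blast
  then obtain C0 where C0: "C0 \<in> \<C>" "T0 \<subseteq> C0" by (auto simp: TI_def)
  obtain x y where e: "e = {x,y}" "x \<noteq> y" "x \<in> T0" "y \<in> T0"
    using diff_elem[OF s T0] by blast
  have fC0: "finite C0" using P C0 V unfolding is_partition_def
    by (meson Union_upper finite_subset)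
  have eC0: "e \<subseteq> C0" using e C0 by auto
  have sub: "TI V \<C> G - TI V \<C> G' \<subseteq> (\<lambda>w. insert w e) ` (C0 - e)"
  proof
    fix T assume T: "T \<in> TI V \<C> G - TI V \<C> G'"
    then obtain C where C: "C \<in> \<C>" "T \<subseteq> C" and Tt: "T \<in> triangles V G"
      by (auto simp: TI_def)
    obtain x' y' where e': "e = {x',y'}" "x' \<noteq> y'" "x' \<in> T" "y' \<in> T"
      using diff_elem[OF s T] by blast
    have "C = C0"
    proof (rule ccontr)
      assume "C \<noteq> C0"
      then have "C \<inter> C0 = {}" using P C C0 unfolding is_partition_def by blast
      moreover have "x' \<in> C" "x' \<in> C0" using e' C eC0 by auto
      ultimately show False by blast
    qed
    have c3: "card T = 3" and fT: "finite T" using Tt by (auto simp: triangles_def intro: card_ge_0_finite)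
    have eT: "e \<subseteq> T" using e' by auto
    have "card (T - e) = 1" using c3 eT fT e' by (simp add: card_Diff_subset)
    then obtain w where w: "T - e = {w}" by (auto simp: card_Suc_eq)
    have "T = insert w e" using w eT by blast
    moreover have "w \<in> C0 - e" using w C \<open>C = C0\<close> by blast
    ultimately show "T \<in> (\<lambda>w. insert w e) ` (C0 - e)" by blast
  qed
  have "card (TI V \<C> G - TI V \<C> G') \<le> card ((\<lambda>w. insert w e) ` (C0 - e))"
    using sub fC0 by (intro card_mono) auto
  also have "\<dots> \<le> card (C0 - e)" using fC0 by (intro card_image_le) auto
  also have "\<dots> = card C0 - 2" using eC0 fC0 e by (simp add: card_Diff_subset)
  finally have "card (TI V \<C> G - TI V \<C> G') + 2 \<le> card C0"
    using e eC0 fC0 card_mono[OF fC0 eC0] by simp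
  then show ?thesis using C0 by blast
qed

lemma n_fst: "fst G = fst G' \<Longrightarrow> n_tri_intra V \<C> G = n_tri_intra V \<C> G'"
  by (simp add: n_tri_intra_def triangles_def)

lemma bound_one:
  assumes V: "finite V" and P: "is_partition V \<C>"
    and s: "fst G' \<subseteq> fst G" "fst G - fst G' = {e}"
    and M: "\<And>C. C \<in> \<C> \<Longrightarrow> int (card C) - 2 \<le> M" "0 \<le> M"
  shows "\<bar>int (n_tri_intra V \<C> G) - int (n_tri_intra V \<C> G')\<bar> \<le> M"
proof -
  have sub: "TI V \<C> G' \<subseteq> TI V \<C> G" using TI_mono[OF s(1)] .
  have f: "finite (TI V \<C> G)" using TI_finite[OF V] .
  have "int (n_tri_intra V \<C> G) - int (n_tri_intra V \<C> G') = int (card (TI V \<C> G - TI V \<C> G'))"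
    using sub f by (simp add: n_TI card_Diff_subset card_mono of_nat_diff finite_subset)
  moreover have "int (card (TI V \<C> G - TI V \<C> G')) \<le> M"
    using key[OF V P s] M by fastforce
  ultimately show ?thesis by simp
qed

lemma sd1: "(A - B) \<union> (B - A) = {e} \<Longrightarrow> e \<in> A \<Longrightarrow> B \<subseteq> A \<and> A - B = {e}"
  by blast

lemma sd2: assumes h: "(A - B) \<union> (B - A) = {e}" and n: "e \<notin> A" shows "A \<subseteq> B \<and> B - A = {e}"
proof -
  have h': "(B - A) \<union> (A - B) = {e}" using h by (simp add: Un_commute)
  have "e \<in> (A - B) \<union> (B - A)" using h by simp
  then have "e \<in> B" using n by simp
  from sd1[OF h' this] show ?thesis .
qed

theorem proposition3:
  fixes V :: "'v set" and \<C> :: "'v set set" and d :: nat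
  assumes "finite V"
    and "is_partition V \<C>"
    and "\<exists>C\<in>\<C>. card C \<ge> 2"
  shows "Max {\<bar>int (n_tri_intra V \<C> G) - int (n_tri_intra V \<C> G')\<bar> | G G'.
              attr_graph V d G \<and> attr_graph V d G' \<and> at_neighbour V G G'}
         = Max {int (card C) - 2 | C. C \<in> \<C>}"
proof -
  let ?L = "{\<bar>int (n_tri_intra V \<C> G) - int (n_tri_intra V \<C> G')\<bar> | G G'.
              attr_graph V d G \<and> attr_graph V d G' \<and> at_neighbour V G G'}"
  let ?R = "{int (card C) - 2 | C. C \<in> \<C>}"
  define M where "M = Max ?R"
  have "\<C> \<subseteq> Pow V" using assms(2) unfolding is_partition_def by blast
  then have fP: "finite \<C>" using assms(1) by (meson finite_Pow_iff finite_subset)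
  have fR: "finite ?R" using fP by simp
  have neR: "?R \<noteq> {}" using assms(3) by blast
  have Mge: "int (card C) - 2 \<le> M" if C: "C \<in> \<C>" for C
  proof -
    have "int (card C) - 2 \<in> ?R" using C by blast
    then show ?thesis unfolding M_def using fR by (rule Max_ge[rotated])
  qed
  obtain C1 where C1: "C1 \<in> \<C>" "card C1 \<ge> 2" using assms(3) by blast
  have M0: "0 \<le> M" using Mge[OF C1(1)] C1(2) by linarith
  have upper: "x \<le> M" if "x \<in> ?L" for x
  proof -
    from that obtain G G' where x: "x = \<bar>int (n_tri_intra V \<C> G) - int (n_tri_intra V \<C> G')\<bar>"
      and nb: "at_neighbour V G G'" by blast
    show ?thesis
    proof (cases "fst G = fst G'")
      case True then show ?thesis using x n_fst[OF True, of V \<C>] M0 by simp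
    next
      case False
      have "card ((fst G - fst G') \<union> (fst G' - fst G)) = 1"
        using nb False unfolding at_neighbour_def by (elim disjE conjE; blast)
      then obtain e where e: "(fst G - fst G') \<union> (fst G' - fst G) = {e}"
        by (rule card_1_singletonE)
      show ?thesis
      proof (cases "e \<in> fst G")
        case True
        note hc = sd1[OF e True]
        note hh = conjunct1[OF hc] conjunct2[OF hc]
        from bound_one[OF assms(1,2) hh Mge M0] show ?thesis using x by simp
      next
        case False
        note hc = sd2[OF e False]
        note hh = conjunct1[OF hc] conjunct2[OF hc]
        from bound_one[OF assms(1,2) hh Mge M0] show ?thesis using x by linarith
      qed
    qed
  qed
  have fL: "finite ?L"
  proof (rule finite_subset[of _ "{0..M}"])
    show "?L \<subseteq> {0..M}"
    proof
      fix x assume xL: "x \<in> ?L"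
      then obtain G G' where "x = \<bar>int (n_tri_intra V \<C> G) - int (n_tri_intra V \<C> G')\<bar>"
        by blast
      then have "0 \<le> x" by simp
      with upper[OF xL] show "x \<in> {0..M}" by simp
    qed
  qed simp
  have "M \<in> ?R" unfolding M_def using fR neR by (rule Max_in)
  then obtain C0 where C0: "C0 \<in> \<C>" "M = int (card C0) - 2" by blast
  have c2: "card C0 \<ge> 2" using C0 M0 by linarith
  have C0V: "C0 \<subseteq> V" using C0 assms(2) unfolding is_partition_def by blast
  have fC0: "finite C0" using C0V assms(1) finite_subset by blast
  obtain a b where ab: "a \<in> C0" "b \<in> C0" "a \<noteq> b"
  proof -
    have "card C0 \<noteq> 0" using c2 by linarith
    then have "C0 \<noteq> {}" by (rule contrapos_nn) simp
    then obtain a where a: "a \<in> C0" by blast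
    have "card (C0 - {a}) = card C0 - 1" using a fC0 by simp
    then have "card (C0 - {a}) \<noteq> 0" using c2 by linarith
    then have "C0 - {a} \<noteq> {}" by (rule contrapos_nn) (simp only: card.empty)
    then obtain b where "b \<in> C0 - {a}" by blast
    then show ?thesis using a that by blast
  qed
  define E where "E = {{x,y} | x y. x \<in> C0 \<and> y \<in> C0 \<and> x \<noteq> y}"
  define X where "X = (\<lambda>v. if v \<in> V then replicate d False else [])"
  define G where "G = (E, X)"
  define G' where "G' = (E - {{a,b}}, X)"
  have Eprop: "e \<subseteq> V \<and> card e = 2" if "e \<in> E" for e
  proof -
    from that obtain x y where "e = {x,y}" "x \<in> C0" "y \<in> C0" "x \<noteq> y"
      unfolding E_def by blast
    then show ?thesis using C0V by auto
  qed
  have Xprop: "(\<forall>v\<in>V. length (X v) = d) \<and> (\<forall>v. v \<notin> V \<longrightarrow> X v = [])"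
    by (simp add: X_def)
  have agG: "attr_graph V d G" unfolding attr_graph_def G_def fst_conv snd_conv
    using Eprop Xprop by blast
  have agG': "attr_graph V d G'" unfolding attr_graph_def G'_def fst_conv snd_conv
    using Eprop Xprop by blast
  have abE: "{a,b} \<in> E" using ab unfolding E_def by blast
  have nb: "at_neighbour V G G'"
  proof -
    have "(fst G - fst G') \<union> (fst G' - fst G) = {{a,b}}" unfolding G_def G'_def fst_conv
      using abE by blast
    then show ?thesis unfolding at_neighbour_def G_def G'_def by simp
  qed
  have diffeq: "TI V \<C> G - TI V \<C> G' = (\<lambda>w. {a,b,w}) ` (C0 - {a,b})"
  proof
    show "TI V \<C> G - TI V \<C> G' \<subseteq> (\<lambda>w. {a,b,w}) ` (C0 - {a,b})"
    proof -
      have s1: "fst G' \<subseteq> fst G" "fst G - fst G' = {{a,b}}"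
        unfolding G_def G'_def using ab E_def by auto
      show ?thesis
      proof
        fix T assume T: "T \<in> TI V \<C> G - TI V \<C> G'"
        obtain x y where xy: "{a,b} = {x,y}" "x \<noteq> y" "x \<in> T" "y \<in> T"
          using diff_elem[OF s1 T] by blast
        have abT: "a \<in> T" "b \<in> T" using xy by (auto simp: doubleton_eq_iff)
        have Tt: "T \<in> triangles V G" using T by (auto simp: TI_def)
        have c3: "card T = 3" and fT: "finite T" using Tt by (auto simp: triangles_def intro: card_ge_0_finite)
        have TC0: "T \<subseteq> C0"
        proof
          fix z assume z: "z \<in> T"
          obtain u where "u \<in> T" "u \<noteq> z" using abT ab by metis
          then have "{z,u} \<in> E" using Tt z by (auto simp: triangles_def G_def)
          then show "z \<in> C0" unfolding E_def by (auto simp: doubleton_eq_iff)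
        qed
        have "card (T - {a,b}) = 1" using c3 abT fT ab by (simp add: card_Diff_subset)
        then obtain w where w: "T - {a,b} = {w}" by (auto simp: card_Suc_eq)
        have "T = {a,b,w}" using w abT by blast
        moreover have "w \<in> C0 - {a,b}" using w TC0 by blast
        ultimately show "T \<in> (\<lambda>w. {a,b,w}) ` (C0 - {a,b})" by blast
      qed
    qed
  next
    show "(\<lambda>w. {a,b,w}) ` (C0 - {a,b}) \<subseteq> TI V \<C> G - TI V \<C> G'"
    proof
      fix T assume "T \<in> (\<lambda>w. {a,b,w}) ` (C0 - {a,b})"
      then obtain w where w: "w \<in> C0" "w \<noteq> a" "w \<noteq> b" "T = {a,b,w}" by blast
      have "T \<in> triangles V G"
        unfolding triangles_def G_def E_def using w ab C0V by auto
      moreover have "T \<subseteq> C0" using w ab by auto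
      moreover have "T \<notin> triangles V G'"
        unfolding triangles_def G'_def using w ab by auto
      ultimately show "T \<in> TI V \<C> G - TI V \<C> G'" using C0 by (auto simp: TI_def)
    qed
  qed
  have cd: "card (TI V \<C> G - TI V \<C> G') = card C0 - 2"
  proof -
    have "inj_on (\<lambda>w. {a,b,w}) (C0 - {a,b})" by (auto simp: inj_on_def doubleton_eq_iff insert_eq_iff) 
    then have "card ((\<lambda>w. {a,b,w}) ` (C0 - {a,b})) = card (C0 - {a,b})" by (rule card_image)
    also have "\<dots> = card C0 - 2" using ab fC0 by (simp add: card_Diff_subset)
    finally show ?thesis using diffeq by simp
  qed
  have sub: "TI V \<C> G' \<subseteq> TI V \<C> G" by (rule TI_mono) (auto simp: G_def G'_def)
  have fG: "finite (TI V \<C> G)" by (rule TI_finite[OF assms(1)])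
  have le: "card (TI V \<C> G') \<le> card (TI V \<C> G)" by (rule card_mono[OF fG sub])
  have "card (TI V \<C> G) - card (TI V \<C> G') = card C0 - 2"
    using cd card_Diff_subset[OF finite_subset[OF sub fG] sub] by simp
  then have "int (card (TI V \<C> G)) - int (card (TI V \<C> G')) = M"
    using le c2 C0(2) by arith
  then have "M = \<bar>int (n_tri_intra V \<C> G) - int (n_tri_intra V \<C> G')\<bar>"
    using M0 unfolding n_TI by simp
  then have MinL: "M \<in> ?L" using agG agG' nb by blast
  then have "M \<le> Max ?L" using fL by (rule Max_ge[rotated])
  moreover have "Max ?L \<le> M"
  proof (rule Max.boundedI[OF fL])
    show "?L \<noteq> {}" using MinL by blast
  next
    fix x assume "x \<in> ?L" then show "x \<le> M" by (rule upper)
  qed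
  ultimately show ?thesis unfolding M_def by simp
qed

end
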